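(* Let $C, C' \in M_n(\mathbb{C})$ be contractions. Then $\mathcal{A}(C)$ is unitarily similar to $\mathcal{A}(C')$ if and only if $C$ and $C'$ are unitarily similar.
   Context: A contraction is a matrix $C$ with operator norm $\|C\|\le 1$. For a contraction $C\in M_n(\mathbb{C})$ put $D_C := I-C^*C\ge 0$ and $d:=\operatorname{rank} D_C$. Let $B_C$ denote the $d\times n$ matrix (with respect to some orthonormal basis of $\operatorname{Im} D_C$) of the map $\mathbb{C}^n\to\operatorname{Im} D_C$ that acts on $\operatorname{Im} D_C$ as $D_C^{1/2}$ and sends $(\operatorname{Im} D_C)^\perp$ to $0$; thus $B_C^*B_C=D_C$ and $B_C$ has full row rank $d$. The associated partial isometry of $C$ is the $(d+n)\times(d+n)$ matrix $\mathcal{A}(C):=\begin{bmatrix}0&B_C\\0&C\end{bmatrix}$ (its unitary similarity class does not depend on the choice of orthonormal basis of $\operatorname{Im}D_C$). *)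

theory Defs
  imports "Jordan_Normal_Form.Schur_Decomposition"
begin

definition cvnorm :: "complex vec \<Rightarrow> real" where
  "cvnorm v = sqrt (\<Sum>i<dim_vec v. (cmod (v $ i))^2)"

definition contraction :: "nat \<Rightarrow> complex mat \<Rightarrow> bool" where
  "contraction n C \<longleftrightarrow> C \<in> carrier_mat n n \<and>
     (\<forall>v \<in> carrier_vec n. cvnorm (C *\<^sub>v v) \<le> cvnorm v)"

definition defect :: "nat \<Rightarrow> complex mat \<Rightarrow> complex mat" where
  "defect n C = 1\<^sub>m n - mat_adjoint C * C"

definition psd_mat :: "nat \<Rightarrow> complex mat \<Rightarrow> bool" where
  "psd_mat n S \<longleftrightarrow> S \<in> carrier_mat n n \<and> mat_adjoint S = S \<and>
     (\<forall>v \<in> carrier_vec n. 0 \<le> Re (conjugate v \<bullet> (S *\<^sub>v v)))"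

definition is_psd_sqrt :: "nat \<Rightarrow> complex mat \<Rightarrow> complex mat \<Rightarrow> bool" where
  "is_psd_sqrt n D S \<longleftrightarrow> psd_mat n S \<and> S * S = D"

definition mat_image :: "nat \<Rightarrow> complex mat \<Rightarrow> complex vec set" where
  "mat_image n D = {D *\<^sub>v v | v. v \<in> carrier_vec n}"

definition vspan :: "nat \<Rightarrow> complex vec list \<Rightarrow> complex vec set" where
  "vspan n es = {mat_of_cols n es *\<^sub>v c | c. c \<in> carrier_vec (length es)}"

definition onb_of_image :: "nat \<Rightarrow> complex mat \<Rightarrow> complex vec list \<Rightarrow> bool" where
  "onb_of_image n D es \<longleftrightarrow> set es \<subseteq> carrier_vec n \<and>
     mat_adjoint (mat_of_cols n es) * mat_of_cols n es = 1\<^sub>m (length es) \<and>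
     vspan n es = mat_image n D"

text \<open>\<open>B\<close> is a matrix \<open>B_C\<close>: the \<open>d\<times>n\<close> matrix, w.r.t. an orthonormal basis \<open>es\<close> of
  \<open>Im D_C\<close>, of the map acting as \<open>D_C^{1/2}\<close> on \<open>Im D_C\<close> and as 0 on its orthogonal
  complement (this map equals \<open>D_C^{1/2}\<close> on all of \<open>\<complex>^n\<close>); its \<open>(i,j)\<close> entry is the
  \<open>i\<close>-th coordinate \<open>\<langle>D^{1/2} e_j, es!i\<rangle>\<close>.\<close>
definition is_B_mat :: "nat \<Rightarrow> complex mat \<Rightarrow> complex mat \<Rightarrow> bool" where
  "is_B_mat n C B \<longleftrightarrow> (\<exists>es S. onb_of_image n (defect n C) es \<and>
      is_psd_sqrt n (defect n C) S \<and>
      B = mat_adjoint (mat_of_cols n es) * S)"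

definition assoc_pi :: "complex mat \<Rightarrow> complex mat \<Rightarrow> complex mat" where
  "assoc_pi B C = four_block_mat (0\<^sub>m (dim_row B) (dim_row B)) B (0\<^sub>m (dim_row C) (dim_row B)) C"

definition unitary_mat :: "nat \<Rightarrow> complex mat \<Rightarrow> bool" where
  "unitary_mat m U \<longleftrightarrow> U \<in> carrier_mat m m \<and> mat_adjoint U * U = 1\<^sub>m m"

definition unitarily_similar :: "complex mat \<Rightarrow> complex mat \<Rightarrow> bool" where
  "unitarily_similar A A' \<longleftrightarrow> (\<exists>m U. A \<in> carrier_mat m m \<and> A' \<in> carrier_mat m m \<and>
     unitary_mat m U \<and> A' = mat_adjoint U * A * U)"

end

theory Submission
  imports Defs
begin


lemma adj_dims[simp]: "dim_row (mat_adjoint A) = dim_col A" "dim_col (mat_adjoint A) = dim_row A"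
  unfolding mat_adjoint_def by auto

lemma adj_index[simp]: "i < dim_col A \<Longrightarrow> j < dim_row A \<Longrightarrow> mat_adjoint (A::complex mat) $$ (i,j) = cnj (A $$ (j,i))"
  unfolding mat_adjoint_def by (simp add: mat_of_rows_def)

lemma adj_carrier[simp]: "A \<in> carrier_mat m n \<Longrightarrow> mat_adjoint A \<in> carrier_mat n m"
  by (metis adj_dims carrier_matD carrier_matI)

lemma adj_adj[simp]: "mat_adjoint (mat_adjoint (A::complex mat)) = A"
  by (rule eq_matI, auto)

lemma adj_one[simp]: "mat_adjoint (1\<^sub>m n :: complex mat) = 1\<^sub>m n"
  by (rule eq_matI, auto)

lemma adj_zero[simp]: "mat_adjoint (0\<^sub>m m n :: complex mat) = 0\<^sub>m n m"
  by (rule eq_matI, auto)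

lemma adj_mult: assumes "(A::complex mat) \<in> carrier_mat m k" "B \<in> carrier_mat k n"
  shows "mat_adjoint (A * B) = mat_adjoint B * mat_adjoint A"
  using assms by (intro eq_matI) (auto simp: scalar_prod_def sum_conjugate intro!: sum.cong)

lemma adj_minus: assumes "(A::complex mat) \<in> carrier_mat m n" "B \<in> carrier_mat m n"
  shows "mat_adjoint (A - B) = mat_adjoint A - mat_adjoint B"
  using assms by (intro eq_matI) auto

lemma adj_add: assumes "(A::complex mat) \<in> carrier_mat m n" "B \<in> carrier_mat m n"
  shows "mat_adjoint (A + B) = mat_adjoint A + mat_adjoint B"
  using assms by (intro eq_matI) auto

lemma adj_four_block: assumes "(A::complex mat) \<in> carrier_mat m1 n1" "B \<in> carrier_mat m1 n2"
  "C \<in> carrier_mat m2 n1" "D \<in> carrier_mat m2 n2"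
  shows "mat_adjoint (four_block_mat A B C D) = four_block_mat (mat_adjoint A) (mat_adjoint C) (mat_adjoint B) (mat_adjoint D)"
  using assms by (intro eq_matI) auto



lemma adj_self_zero: assumes "(M::complex mat) \<in> carrier_mat m n" "mat_adjoint M * M = 0\<^sub>m n n"
  shows "M = 0\<^sub>m m n"
proof (rule eq_matI)
  fix i j assume i: "i < dim_row (0\<^sub>m m n :: complex mat)" and j: "j < dim_col (0\<^sub>m m n :: complex mat)"
  have "(mat_adjoint M * M) $$ (j,j) = 0" using assms j by simp
  moreover have "(mat_adjoint M * M) $$ (j,j) = (\<Sum>k<m. cnj (M $$ (k,j)) * M $$ (k,j))"
    using assms(1) j by (auto simp: scalar_prod_def lessThan_atLeast0 intro!: sum.cong)
  ultimately have "(\<Sum>k<m. cnj (M $$ (k,j)) * M $$ (k,j)) = 0" by simp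
  moreover have "complex_of_real (\<Sum>k<m. (cmod (M $$ (k,j)))^2) = (\<Sum>k<m. cnj (M $$ (k,j)) * M $$ (k,j))"
    by (simp only: of_real_sum complex_norm_square mult.commute)
  ultimately have "(\<Sum>k<m. (cmod (M $$ (k,j)))^2) = 0"
    by (metis of_real_eq_0_iff)
  hence "\<forall>k\<in>{..<m}. (cmod (M $$ (k,j)))^2 = 0"
    by (subst (asm) sum_nonneg_eq_0_iff) auto
  thus "M $$ (i,j) = 0\<^sub>m m n $$ (i,j)" using i j by auto
qed (use assms in auto)

lemma unitary_dims_eq: assumes W: "(W::complex mat) \<in> carrier_mat a b"
  and 1: "mat_adjoint W * W = 1\<^sub>m b" and 2: "W * mat_adjoint W = 1\<^sub>m a"
  shows "a = b"
proof -
  have "(\<Sum>i<b. (mat_adjoint W * W) $$ (i,i)) = (\<Sum>i<b. \<Sum>k<a. cnj (W $$ (k,i)) * W $$ (k,i))"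
    using W by (intro sum.cong) (auto simp: scalar_prod_def lessThan_atLeast0)
  also have "\<dots> = (\<Sum>k<a. \<Sum>i<b. W $$ (k,i) * cnj (W $$ (k,i)))"
    by (subst sum.swap) (simp add: mult.commute)
  also have "\<dots> = (\<Sum>k<a. (W * mat_adjoint W) $$ (k,k))"
    using W by (intro sum.cong) (auto simp: scalar_prod_def lessThan_atLeast0)
  finally have "(\<Sum>i<b. (1\<^sub>m b :: complex mat) $$ (i,i)) = (\<Sum>k<a. (1\<^sub>m a :: complex mat) $$ (k,k))"
    unfolding 1 2 .
  hence "of_nat b = (of_nat a :: complex)" by simp
  thus ?thesis by simp
qed



lemmas carr = adj_carrier mult_carrier_mat minus_carrier_mat one_carrier_mat add_carrier_mat zero_carrier_mat

lemma col_unit: "(A::complex mat) \<in> carrier_mat m n \<Longrightarrow> j < n \<Longrightarrow> col A j = A *\<^sub>v unit_vec n j"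
  by (intro eq_vecI) auto

lemma mat_minus_eq0: "(A::complex mat) \<in> carrier_mat m n \<Longrightarrow> B \<in> carrier_mat m n \<Longrightarrow> A - B = 0\<^sub>m m n \<Longrightarrow> A = B"
proof (rule eq_matI)
  fix i j assume a: "A \<in> carrier_mat m n" "B \<in> carrier_mat m n" "A - B = 0\<^sub>m m n" "i < dim_row B" "j < dim_col B"
  have "(A - B) $$ (i,j) = A $$ (i,j) - B $$ (i,j)" using a(1,2,4,5) by simp
  moreover have "(A - B) $$ (i,j) = 0" using a by simp
  ultimately show "A $$ (i,j) = B $$ (i,j)" by simp
qed auto

lemma defect_carrier: "C \<in> carrier_mat n n \<Longrightarrow> defect n C \<in> carrier_mat n n"
  unfolding defect_def by (metis adj_carrier minus_carrier_mat mult_carrier_mat one_carrier_mat)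

lemma defect_adj: assumes "C \<in> carrier_mat n n" shows "mat_adjoint (defect n C) = defect n C"
proof -
  have "mat_adjoint (defect n C) = mat_adjoint (1\<^sub>m n) - mat_adjoint (mat_adjoint C * C)"
    unfolding defect_def using assms by (intro adj_minus) auto
  also have "\<dots> = defect n C" unfolding defect_def using assms by (simp add: adj_mult[of _ n n _ n])
  finally show ?thesis .
qed

lemma B_props:
  assumes C: "C \<in> carrier_mat n n" and B: "is_B_mat n C B"
  shows "B \<in> carrier_mat (dim_row B) n" "mat_adjoint B * B = defect n C"
    "\<exists>R \<in> carrier_mat n (dim_row B). B * R = 1\<^sub>m (dim_row B)"
proof -
  obtain es S where onb: "onb_of_image n (defect n C) es" and sq: "is_psd_sqrt n (defect n C) S"
    and Bdef: "B = mat_adjoint (mat_of_cols n es) * S" using B unfolding is_B_mat_def by blast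
  define E where "E = mat_of_cols n es"
  define d where "d = length es"
  define D where "D = defect n C"
  have E: "E \<in> carrier_mat n d" unfolding E_def d_def by simp
  have EE: "mat_adjoint E * E = 1\<^sub>m d" using onb unfolding onb_of_image_def E_def d_def by simp
  have span: "vspan n es = mat_image n D" using onb unfolding onb_of_image_def D_def by simp
  have S: "S \<in> carrier_mat n n" "mat_adjoint S = S" "S * S = D"
    using sq unfolding is_psd_sqrt_def psd_mat_def D_def by auto
  have D: "D \<in> carrier_mat n n" "mat_adjoint D = D" unfolding D_def using C defect_carrier defect_adj by auto
  have Bc: "B \<in> carrier_mat d n" unfolding Bdef E_def[symmetric] using E S by (metis adj_carrier mult_carrier_mat)
  hence dB: "dim_row B = d" by simp
  show "B \<in> carrier_mat (dim_row B) n" using Bc dB by simp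
  define Q where "Q = 1\<^sub>m n - E * mat_adjoint E"
  have Q: "Q \<in> carrier_mat n n" unfolding Q_def using E by (meson carr)
  have Qadj: "mat_adjoint Q = Q" unfolding Q_def using E
    by (simp add: adj_minus[of _ n n] adj_mult[of _ n d _ n])
  have QE: "Q * E = 0\<^sub>m n d"
  proof -
    have "Q * E = E - E * (mat_adjoint E * E)" unfolding Q_def using E
      by (simp add: minus_mult_distrib_mat[of _ n n] assoc_mult_mat[of _ n d _ n _ d])
    also have "\<dots> = 0\<^sub>m n d" unfolding EE using E by simp
    finally show ?thesis .
  qed
  have QD: "Q * D = 0\<^sub>m n n"
  proof (rule eq_matI)
    fix i j assume i: "i < dim_row (0\<^sub>m n n :: complex mat)" and j: "j < dim_col (0\<^sub>m n n :: complex mat)"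
    have "D *\<^sub>v unit_vec n j \<in> mat_image n D" unfolding mat_image_def by auto
    then obtain c where c: "c \<in> carrier_vec d" "D *\<^sub>v unit_vec n j = E *\<^sub>v c"
      unfolding span[symmetric] vspan_def E_def d_def by auto
    have "col D j = D *\<^sub>v unit_vec n j" using D j by (simp add: col_unit)
    hence "col D j = E *\<^sub>v c" using c by simp
    have "(Q * D) $$ (i,j) = (Q *\<^sub>v col D j) $ i" using Q D i j by simp
    also have "\<dots> = (Q *\<^sub>v (E *\<^sub>v c)) $ i" using \<open>col D j = E *\<^sub>v c\<close> by simp
    also have "\<dots> = ((Q * E) *\<^sub>v c) $ i" using Q E c by simp
    also have "\<dots> = 0" using QE c i by simp
    finally show "(Q * D) $$ (i,j) = 0\<^sub>m n n $$ (i,j)" using i j by simp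
  qed (use Q D in auto)
  have DQ: "D * Q = 0\<^sub>m n n"
  proof -
    have "mat_adjoint (Q * D) = mat_adjoint D * mat_adjoint Q" using Q D by (simp add: adj_mult[of _ n n _ n])
    thus ?thesis using QD D(2) Qadj by simp
  qed
  have SQ: "S * Q = 0\<^sub>m n n"
  proof (rule adj_self_zero)
    show "S * Q \<in> carrier_mat n n" using S Q by simp
    have "mat_adjoint (S * Q) * (S * Q) = (Q * S) * (S * Q)" using S Q Qadj by (simp add: adj_mult[of _ n n _ n])
    also have "\<dots> = Q * (S * (S * Q))" by (rule assoc_mult_mat[OF Q S(1) mult_carrier_mat[OF S(1) Q]])
    also have "\<dots> = Q * ((S * S) * Q)" by (simp only: assoc_mult_mat[OF S(1) S(1) Q])
    also have "\<dots> = 0\<^sub>m n n" using DQ S Q by (simp del: assoc_mult_mat)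
    finally show "mat_adjoint (S * Q) * (S * Q) = 0\<^sub>m n n" .
  qed
  have QS: "Q * S = 0\<^sub>m n n"
  proof -
    have "mat_adjoint (S * Q) = mat_adjoint Q * mat_adjoint S" using S Q by (simp add: adj_mult[of _ n n _ n])
    thus ?thesis using SQ S Qadj by simp
  qed
  have PS: "E * mat_adjoint E * S = S"
  proof -
    have "Q * S = S - E * mat_adjoint E * S" unfolding Q_def using E S
      by (simp add: minus_mult_distrib_mat[of _ n n])
    hence "S - E * mat_adjoint E * S = 0\<^sub>m n n" using QS by simp
    thus ?thesis using mat_minus_eq0[OF S(1) mult_carrier_mat[OF mult_carrier_mat[OF E adj_carrier[OF E]] S(1)]] by simp
  qed
  have BS: "B * S = mat_adjoint E * D" unfolding Bdef E_def[symmetric] using E S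
    by (simp add: assoc_mult_mat[of _ d n _ n _ n])
  have "mat_adjoint B * B = (S * E) * (mat_adjoint E * S)" unfolding Bdef E_def[symmetric] using E S
    by (simp add: adj_mult[of _ d n _ n])
  also have "\<dots> = S * (E * (mat_adjoint E * S))"
    by (rule assoc_mult_mat[OF S(1) E mult_carrier_mat[OF adj_carrier[OF E] S(1)]])
  also have "\<dots> = S * (E * mat_adjoint E * S)"
    by (simp only: assoc_mult_mat[OF E adj_carrier[OF E] S(1)])
  also have "\<dots> = D" using PS S by simp
  finally show "mat_adjoint B * B = defect n C" unfolding D_def .
  define wf where "wf j = (SOME w. w \<in> carrier_vec n \<and> D *\<^sub>v w = col E j)" for j
  have wf: "wf j \<in> carrier_vec n \<and> D *\<^sub>v wf j = col E j" if j: "j < d" for j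
  proof -
    have "col E j \<in> vspan n es" unfolding vspan_def E_def[symmetric] d_def[symmetric]
      using col_unit[OF E j] by auto
    hence "\<exists>w. w \<in> carrier_vec n \<and> D *\<^sub>v w = col E j" unfolding span mat_image_def by auto
    thus ?thesis unfolding wf_def by (rule someI_ex)
  qed
  define R where "R = mat n d (\<lambda>(i,j). (S *\<^sub>v wf j) $ i)"
  have R: "R \<in> carrier_mat n d" unfolding R_def by simp
  have colR: "col R j = S *\<^sub>v wf j" if "j < d" for j
    using that S by (intro eq_vecI) (auto simp: R_def)
  have "B * R = 1\<^sub>m d"
  proof (rule eq_matI)
    fix i j assume i: "i < dim_row (1\<^sub>m d :: complex mat)" and j: "j < dim_col (1\<^sub>m d :: complex mat)"
    have "(B * R) $$ (i,j) = (B *\<^sub>v col R j) $ i" using Bc R i j by simp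
    also have "\<dots> = ((B * S) *\<^sub>v wf j) $ i" using colR[of j] wf[of j] j Bc S by simp
    also have "\<dots> = (mat_adjoint E *\<^sub>v col E j) $ i" unfolding BS using wf[of j] j E D
      by (subst assoc_mult_mat_vec[of _ d n _ n]) auto
    also have "\<dots> = (mat_adjoint E * E) $$ (i,j)" using E i j by simp
    finally show "(B * R) $$ (i,j) = 1\<^sub>m d $$ (i,j)" unfolding EE .
  qed (use Bc R in auto)
  thus "\<exists>R \<in> carrier_mat n (dim_row B). B * R = 1\<^sub>m (dim_row B)" using R dB by auto
qed



lemma left_unitary_factor:
  fixes X Y R R' :: "complex mat"
  assumes X: "X \<in> carrier_mat d n" and Y: "Y \<in> carrier_mat d' n"
    and XY: "mat_adjoint X * X = mat_adjoint Y * Y"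
    and R: "R \<in> carrier_mat n d" and XR: "X * R = 1\<^sub>m d"
    and R': "R' \<in> carrier_mat n d'" and YR': "Y * R' = 1\<^sub>m d'"
  shows "\<exists>W \<in> carrier_mat d' d. W * X = Y \<and> mat_adjoint W * W = 1\<^sub>m d \<and> W * mat_adjoint W = 1\<^sub>m d'"
proof -
  have YYg: "mat_adjoint Y * (Y * Z) = mat_adjoint X * (X * Z)" if Z: "Z \<in> carrier_mat n k" for Z k
  proof -
    have "mat_adjoint Y * (Y * Z) = (mat_adjoint Y * Y) * Z" using assoc_mult_mat[OF adj_carrier[OF Y] Y Z] by simp
    also have "\<dots> = (mat_adjoint X * X) * Z" using XY by simp
    also have "\<dots> = mat_adjoint X * (X * Z)" using assoc_mult_mat[OF adj_carrier[OF X] X Z] by simp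
    finally show ?thesis .
  qed
  define P where "P = R * X - 1\<^sub>m n"
  have RX: "R * X \<in> carrier_mat n n" using R X by simp
  have P: "P \<in> carrier_mat n n" unfolding P_def by (rule minus_carrier_mat[OF one_carrier_mat])
  have XRX: "X * (R * X) = X" using assoc_mult_mat[OF X R X] XR X by simp
  have XP: "X * P = 0\<^sub>m d n"
    unfolding P_def using mult_minus_distrib_mat[OF X RX one_carrier_mat] XRX X by simp
  have YP: "Y * P = 0\<^sub>m d' n"
  proof (rule adj_self_zero)
    show "Y * P \<in> carrier_mat d' n" using Y P by simp
    have "mat_adjoint (Y * P) * (Y * P) = mat_adjoint P * (mat_adjoint Y * (Y * P))"
      unfolding adj_mult[OF Y P] using assoc_mult_mat[OF adj_carrier[OF P] adj_carrier[OF Y] mult_carrier_mat[OF Y P]] .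
    also have "\<dots> = mat_adjoint P * (mat_adjoint X * (X * P))" using YYg[OF P] by simp
    also have "\<dots> = 0\<^sub>m n n" unfolding XP using P X by simp
    finally show "mat_adjoint (Y * P) * (Y * P) = 0\<^sub>m n n" .
  qed
  have YRX: "Y * (R * X) = Y"
  proof -
    have "Y * (R * X) - Y = 0\<^sub>m d' n" using YP unfolding P_def
      using mult_minus_distrib_mat[OF Y RX one_carrier_mat] Y by simp
    thus ?thesis using mat_minus_eq0[OF mult_carrier_mat[OF Y RX] Y] by simp
  qed
  define W where "W = Y * R"
  have W: "W \<in> carrier_mat d' d" unfolding W_def using Y R by simp
  have WX: "W * X = Y" unfolding W_def using assoc_mult_mat[OF Y R X] YRX by simp
  have WW: "mat_adjoint W * W = 1\<^sub>m d"
  proof -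
    have "mat_adjoint W * W = mat_adjoint R * (mat_adjoint Y * (Y * R))"
      unfolding W_def adj_mult[OF Y R] using assoc_mult_mat[OF adj_carrier[OF R] adj_carrier[OF Y] mult_carrier_mat[OF Y R]] .
    also have "\<dots> = mat_adjoint R * (mat_adjoint X * (X * R))" using YYg[OF R] by simp
    also have "\<dots> = mat_adjoint R * mat_adjoint X" unfolding XR using X by simp
    also have "\<dots> = mat_adjoint (X * R)" using adj_mult[OF X R] by simp
    finally show ?thesis unfolding XR by simp
  qed
  have XR'c: "X * R' \<in> carrier_mat d d'" using X R' by simp
  have WXR: "W * (X * R') = 1\<^sub>m d'" using assoc_mult_mat[OF W X R'] WX YR' by simp
  have "mat_adjoint W = mat_adjoint W * (W * (X * R'))" unfolding WXR using W by simp
  also have "\<dots> = (mat_adjoint W * W) * (X * R')" using assoc_mult_mat[OF adj_carrier[OF W] W XR'c] by simp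
  also have "\<dots> = X * R'" unfolding WW by (rule left_mult_one_mat[OF XR'c])
  finally have "W * mat_adjoint W = 1\<^sub>m d'" using WXR by simp
  thus ?thesis using W WX WW by blast
qed



lemma mult_carrier_iff: "A * B \<in> carrier_mat m k \<longleftrightarrow> dim_row A = m \<and> dim_col B = k"
  unfolding carrier_mat_def by auto

lemma adj_carrier_iff: "mat_adjoint A \<in> carrier_mat m k \<longleftrightarrow> dim_row A = k \<and> dim_col A = m"
  unfolding carrier_mat_def by auto

lemma back_dir:
  assumes C: "contraction n C" and C': "contraction n C'"
    and B: "is_B_mat n C B" and B': "is_B_mat n C' B'"
    and us: "unitarily_similar C C'"
  shows "unitarily_similar (assoc_pi B C) (assoc_pi B' C')"
proof -
  have Cc: "C \<in> carrier_mat n n" and C'c: "C' \<in> carrier_mat n n"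
    using C C' unfolding contraction_def by auto
  obtain m U where "C \<in> carrier_mat m m" and U0: "unitary_mat m U" and C'U: "C' = mat_adjoint U * C * U"
    using us unfolding unitarily_similar_def by auto
  hence "m = n" using Cc by auto
  hence U: "U \<in> carrier_mat n n" and UU: "mat_adjoint U * U = 1\<^sub>m n"
    using U0 unfolding unitary_mat_def by auto
  have UU': "U * mat_adjoint U = 1\<^sub>m n"
    by (rule mat_mult_left_right_inverse[OF adj_carrier[OF U] U UU])
  define d where "d = dim_row B"
  define d' where "d' = dim_row B'"
  note BP = B_props[OF Cc B, folded d_def]
  note BP' = B_props[OF C'c B', folded d'_def]
  have Bc: "B \<in> carrier_mat d n" and BB: "mat_adjoint B * B = defect n C" using BP by auto
  obtain R0 where R0: "R0 \<in> carrier_mat n d" "B * R0 = 1\<^sub>m d" using BP by auto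
  have B'c: "B' \<in> carrier_mat d' n" and BB': "mat_adjoint B' * B' = defect n C'" using BP' by auto
  obtain R0' where R0': "R0' \<in> carrier_mat n d'" "B' * R0' = 1\<^sub>m d'" using BP' by auto
  define X where "X = B * U"
  define R where "R = mat_adjoint U * R0"
  have X: "X \<in> carrier_mat d n" unfolding X_def using Bc U by simp
  have R: "R \<in> carrier_mat n d" unfolding R_def by (rule mult_carrier_mat[OF adj_carrier[OF U] R0(1)])
  have XR: "X * R = 1\<^sub>m d"
  proof -
    have "X * R = B * (U * (mat_adjoint U * R0))" unfolding X_def R_def
      using assoc_mult_mat[OF Bc U R] unfolding R_def by simp
    also have "U * (mat_adjoint U * R0) = R0"
      using assoc_mult_mat[OF U adj_carrier[OF U] R0(1)] UU' R0 by simp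
    finally show ?thesis using R0 by simp
  qed
  have UCg: "U * (mat_adjoint U * Z) = Z" if "Z \<in> carrier_mat n k" for Z k
    using assoc_mult_mat[OF U adj_carrier[OF U] that] UU' that by simp
  have CU: "C * U \<in> carrier_mat n n" using Cc U by simp
  have XX: "mat_adjoint X * X = defect n C'"
  proof -
    have "mat_adjoint X * X = mat_adjoint U * ((mat_adjoint B * B) * U)"
      unfolding X_def adj_mult[OF Bc U]
      using assoc_mult_mat[OF adj_carrier[OF U] adj_carrier[OF Bc] mult_carrier_mat[OF Bc U]] assoc_mult_mat[OF adj_carrier[OF Bc] Bc U] by simp
    also have "\<dots> = mat_adjoint U * (U - mat_adjoint C * (C * U))" unfolding BB defect_def
      using Cc U minus_mult_distrib_mat[OF one_carrier_mat mult_carrier_mat[OF adj_carrier[OF Cc] Cc] U]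
        assoc_mult_mat[OF adj_carrier[OF Cc] Cc U] by simp
    also have "\<dots> = 1\<^sub>m n - mat_adjoint U * (mat_adjoint C * (C * U))"
      using mult_minus_distrib_mat[OF adj_carrier[OF U] U mult_carrier_mat[OF adj_carrier[OF Cc] CU]] UU by simp
    also have "mat_adjoint U * (mat_adjoint C * (C * U)) = mat_adjoint C' * C'"
    proof -
      have "mat_adjoint C' = mat_adjoint U * (mat_adjoint C * U)" unfolding C'U
        using adj_mult[OF mult_carrier_mat[OF adj_carrier[OF U] Cc] U] adj_mult[OF adj_carrier[OF U] Cc] U Cc
        by (simp add: assoc_mult_mat[of _ n n _ n _ n])
      hence "mat_adjoint C' * C' = mat_adjoint U * (mat_adjoint C * (U * (mat_adjoint U * (C * U))))"
        unfolding C'U using U Cc carrier_matD[OF U] carrier_matD[OF Cc] by (simp add: mult_carrier_iff adj_carrier_iff)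
      thus ?thesis using UCg[OF CU] by simp
    qed
    finally show ?thesis unfolding defect_def .
  qed
  obtain W where W: "W \<in> carrier_mat d' d" and WX: "W * X = B'" and WW: "mat_adjoint W * W = 1\<^sub>m d"
    and WW': "W * mat_adjoint W = 1\<^sub>m d'"
    using left_unitary_factor[OF X B'c _ R XR R0'] XX BB' by metis
  have dd: "d' = d" using unitary_dims_eq[OF W WW WW'] .
  define V where "V = four_block_mat (mat_adjoint W) (0\<^sub>m d n) (0\<^sub>m n d) U"
  have V: "V \<in> carrier_mat (d+n) (d+n)" unfolding V_def using W U dd by simp
  have Vadj: "mat_adjoint V = four_block_mat W (0\<^sub>m d n) (0\<^sub>m n d) (mat_adjoint U)"
    unfolding V_def using adj_four_block[OF adj_carrier[OF W] zero_carrier_mat zero_carrier_mat U] dd by simp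
  have Wc: "W \<in> carrier_mat d d" using W dd by simp
  have "mat_adjoint V * V = 1\<^sub>m (d+n)"
    unfolding Vadj unfolding V_def
    using mult_four_block_mat[OF Wc zero_carrier_mat zero_carrier_mat adj_carrier[OF U]
        adj_carrier[OF Wc] zero_carrier_mat zero_carrier_mat U] WW' UU Wc U dd
    by simp
  hence Vu: "unitary_mat (d+n) V" unfolding unitary_mat_def using V by simp
  have A: "assoc_pi B C = four_block_mat (0\<^sub>m d d) B (0\<^sub>m n d) C"
    unfolding assoc_pi_def d_def using Cc by simp
  have A': "assoc_pi B' C' = four_block_mat (0\<^sub>m d d) B' (0\<^sub>m n d) C'"
    unfolding assoc_pi_def d'_def[symmetric] dd using C'c by simp
  have Ac: "assoc_pi B C \<in> carrier_mat (d+n) (d+n)" unfolding A using Bc Cc by simp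
  have A'c: "assoc_pi B' C' \<in> carrier_mat (d+n) (d+n)" unfolding A' using B'c C'c dd by simp
  have "mat_adjoint V * assoc_pi B C = four_block_mat (0\<^sub>m d d) (W * B) (0\<^sub>m n d) (mat_adjoint U * C)"
    unfolding Vadj A
    using mult_four_block_mat[OF Wc zero_carrier_mat zero_carrier_mat adj_carrier[OF U]
        zero_carrier_mat Bc zero_carrier_mat Cc] Wc U Bc Cc mult_carrier_mat[OF adj_carrier[OF U] Cc]
    by simp
  hence "mat_adjoint V * assoc_pi B C * V = four_block_mat (0\<^sub>m d d) (W * B * U) (0\<^sub>m n d) (mat_adjoint U * C * U)"
    unfolding V_def
    using mult_four_block_mat[OF zero_carrier_mat mult_carrier_mat[OF Wc Bc] zero_carrier_mat mult_carrier_mat[OF adj_carrier[OF U] Cc]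
        adj_carrier[OF Wc] zero_carrier_mat zero_carrier_mat U] Wc U Bc Cc
      mult_carrier_mat[OF mult_carrier_mat[OF adj_carrier[OF U] Cc] U] mult_carrier_mat[OF mult_carrier_mat[OF Wc Bc] U]
      mult_carrier_mat[OF mult_carrier_mat[OF Wc Bc] zero_carrier_mat]
    by (simp add: mult_carrier_iff adj_carrier_iff)
  also have "\<dots> = four_block_mat (0\<^sub>m d d) B' (0\<^sub>m n d) C'" unfolding C'U[symmetric] WX[symmetric] X_def
    using assoc_mult_mat[OF Wc Bc U] by simp
  also have "\<dots> = assoc_pi B' C'" using A' by simp
  finally show ?thesis unfolding unitarily_similar_def using Ac A'c Vu by metis
qed



lemma four_block_inj:
  assumes "(A::complex mat) \<in> carrier_mat nr1 nc1" "B \<in> carrier_mat nr1 nc2" "C \<in> carrier_mat nr2 nc1" "D \<in> carrier_mat nr2 nc2"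
    "A' \<in> carrier_mat nr1 nc1" "B' \<in> carrier_mat nr1 nc2" "C' \<in> carrier_mat nr2 nc1" "D' \<in> carrier_mat nr2 nc2"
    and eq: "four_block_mat A B C D = four_block_mat A' B' C' D'"
  shows "A = A' \<and> B = B' \<and> C = C' \<and> D = D'"
proof -
  have e: "four_block_mat A B C D $$ (i,j) = four_block_mat A' B' C' D' $$ (i,j)" for i j using eq by simp
  have [simp]: "dim_row A = nr1" "dim_col A = nc1" "dim_row D = nr2" "dim_col D = nc2"
    "dim_row A' = nr1" "dim_col A' = nc1" "dim_row D' = nr2" "dim_col D' = nc2"
    "dim_row B = nr1" "dim_col B = nc2" "dim_row C = nr2" "dim_col C = nc1"
    "dim_row B' = nr1" "dim_col B' = nc2" "dim_row C' = nr2" "dim_col C' = nc1"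
    using assms(1-8) by auto
  have "A = A'"
  proof (rule eq_matI)
    fix i j assume "i < dim_row A'" "j < dim_col A'"
    thus "A $$ (i,j) = A' $$ (i,j)" using e[of i j] assms(1-8) by simp
  qed (use assms in auto)
  moreover have "B = B'"
  proof (rule eq_matI)
    fix i j assume "i < dim_row B'" "j < dim_col B'"
    thus "B $$ (i,j) = B' $$ (i,j)" using e[of i "j + nc1"] assms(1-8) by simp
  qed (use assms in auto)
  moreover have "C = C'"
  proof (rule eq_matI)
    fix i j assume "i < dim_row C'" "j < dim_col C'"
    thus "C $$ (i,j) = C' $$ (i,j)" using e[of "i + nr1" j] assms(1-8) by simp
  qed (use assms in auto)
  moreover have "D = D'"
  proof (rule eq_matI)
    fix i j assume "i < dim_row D'" "j < dim_col D'"
    thus "D $$ (i,j) = D' $$ (i,j)" using e[of "i + nr1" "j + nc1"] assms(1-8) by simp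
  qed (use assms in auto)
  ultimately show ?thesis by simp
qed

lemma zero_mat_vec[simp]: "(a::complex vec) \<in> carrier_vec k \<Longrightarrow> 0\<^sub>m m k *\<^sub>v a = 0\<^sub>v m"
  by (intro eq_vecI) (auto simp: scalar_prod_def)

lemma mat_vec_zero: "(A::complex mat) \<in> carrier_mat m k \<Longrightarrow> A *\<^sub>v 0\<^sub>v k = 0\<^sub>v m"
  by (intro eq_vecI) (auto simp: scalar_prod_def)

lemma kernel_lemma:
  assumes Cc: "(C::complex mat) \<in> carrier_mat n n" and Bc: "B \<in> carrier_mat d n"
    and BB: "mat_adjoint B * B = defect n C"
    and v: "v \<in> carrier_vec (d+n)"
    and Av: "four_block_mat (0\<^sub>m d d) B (0\<^sub>m n d) C *\<^sub>v v = 0\<^sub>v (d+n)"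
    and i: "i < n"
  shows "v $ (d+i) = 0"
proof -
  define a where "a = vec_first v d"
  define y where "y = vec_last v n"
  have a: "a \<in> carrier_vec d" and y: "y \<in> carrier_vec n" unfolding a_def y_def by auto
  have vay: "v = a @\<^sub>v y" unfolding a_def y_def using v by simp
  have "four_block_mat (0\<^sub>m d d) B (0\<^sub>m n d) C *\<^sub>v v = (B *\<^sub>v y) @\<^sub>v (C *\<^sub>v y)"
    unfolding vay using four_block_mat_mult_vec[OF zero_carrier_mat Bc zero_carrier_mat Cc a y] a y Bc Cc by simp
  moreover have "0\<^sub>v (d+n) = (0\<^sub>v d :: complex vec) @\<^sub>v 0\<^sub>v n" by (intro eq_vecI) auto
  ultimately have "(B *\<^sub>v y) @\<^sub>v (C *\<^sub>v y) = 0\<^sub>v d @\<^sub>v 0\<^sub>v n" using Av by simp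
  hence By: "B *\<^sub>v y = 0\<^sub>v d" and Cy: "C *\<^sub>v y = 0\<^sub>v n"
    using append_vec_eq[OF mult_mat_vec_carrier[OF Bc y] zero_carrier_vec] by auto
  have "defect n C *\<^sub>v y = y - mat_adjoint C *\<^sub>v (C *\<^sub>v y)" unfolding defect_def
    using minus_mult_distrib_mat_vec[OF one_carrier_mat mult_carrier_mat[OF adj_carrier[OF Cc] Cc] y]
      assoc_mult_mat_vec[OF adj_carrier[OF Cc] Cc y] y by simp
  also have "\<dots> = y" unfolding Cy mat_vec_zero[OF adj_carrier[OF Cc]] using y by simp
  finally have 1: "defect n C *\<^sub>v y = y" .
  have "defect n C *\<^sub>v y = mat_adjoint B *\<^sub>v (B *\<^sub>v y)" unfolding BB[symmetric]
    using assoc_mult_mat_vec[OF adj_carrier[OF Bc] Bc y] .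
  also have "\<dots> = 0\<^sub>v n" unfolding By by (rule mat_vec_zero[OF adj_carrier[OF Bc]])
  finally have "y = 0\<^sub>v n" using 1 by simp
  hence "y $ i = 0" using i by simp
  thus ?thesis unfolding y_def vec_last_def using v i by simp
qed



lemma fwd_dir:
  assumes C: "contraction n C" and C': "contraction n C'"
    and B: "is_B_mat n C B" and B': "is_B_mat n C' B'"
    and us: "unitarily_similar (assoc_pi B C) (assoc_pi B' C')"
  shows "unitarily_similar C C'"
proof -
  have Cc: "C \<in> carrier_mat n n" and C'c: "C' \<in> carrier_mat n n"
    using C C' unfolding contraction_def by auto
  define d where "d = dim_row B"
  define d' where "d' = dim_row B'"
  note BP = B_props[OF Cc B, folded d_def]
  note BP' = B_props[OF C'c B', folded d'_def]
  have Bc: "B \<in> carrier_mat d n" and BB: "mat_adjoint B * B = defect n C" using BP by auto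
  have B'c0: "B' \<in> carrier_mat d' n" using BP' by auto
  have A: "assoc_pi B C = four_block_mat (0\<^sub>m d d) B (0\<^sub>m n d) C"
    unfolding assoc_pi_def d_def using Cc by simp
  have A'0: "assoc_pi B' C' = four_block_mat (0\<^sub>m d' d') B' (0\<^sub>m n d') C'"
    unfolding assoc_pi_def d'_def using C'c by simp
  obtain m U where Am: "assoc_pi B C \<in> carrier_mat m m" and A'm: "assoc_pi B' C' \<in> carrier_mat m m"
    and U0: "unitary_mat m U" and AU: "assoc_pi B' C' = mat_adjoint U * assoc_pi B C * U"
    using us unfolding unitarily_similar_def by auto
  have "m = d + n" using Am unfolding A using Bc Cc by auto
  moreover have "m = d' + n" using A'm unfolding A'0 using B'c0 C'c by auto
  ultimately have dd: "d' = d" and md: "m = d + n" by auto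
  have B'c: "B' \<in> carrier_mat d n" using B'c0 dd by simp
  have A': "assoc_pi B' C' = four_block_mat (0\<^sub>m d d) B' (0\<^sub>m n d) C'" using A'0 dd by simp
  define A where "A = assoc_pi B C"
  define A' where "A' = assoc_pi B' C'"
  have Ac: "A \<in> carrier_mat (d+n) (d+n)" using Am md A_def by simp
  have A'c: "A' \<in> carrier_mat (d+n) (d+n)" using A'm md A'_def by simp
  have U: "U \<in> carrier_mat (d+n) (d+n)" and UU: "mat_adjoint U * U = 1\<^sub>m (d+n)"
    using U0 md unfolding unitary_mat_def by auto
  have UU': "U * mat_adjoint U = 1\<^sub>m (d+n)"
    by (rule mat_mult_left_right_inverse[OF adj_carrier[OF U] U UU])
  have AU': "A' = mat_adjoint U * A * U" using AU A_def A'_def by simp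
  have "U * A' = U * (mat_adjoint U * A * U)" using AU' by simp
  also have "\<dots> = (U * (mat_adjoint U * A)) * U"
    using assoc_mult_mat[OF U mult_carrier_mat[OF adj_carrier[OF U] Ac] U] by simp
  also have "\<dots> = A * U" using assoc_mult_mat[OF U adj_carrier[OF U] Ac] UU' Ac by simp
  finally have UA: "U * A' = A * U" .
  have dimsU0: "dim_row U = d + n" using U by auto
  have U3z: "U $$ (d+i, j) = 0" if i: "i < n" and j: "j < d" for i j
  proof -
    have "col A' j = 0\<^sub>v (d+n)" unfolding A'_def A' using j B'c C'c by (intro eq_vecI) auto
    hence "col (U * A') j = 0\<^sub>v (d+n)" using col_mult2[OF U A'c, of j] j mat_vec_zero[OF U] by simp
    hence "A *\<^sub>v col U j = 0\<^sub>v (d+n)" unfolding UA using col_mult2[OF Ac U, of j] j by simp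
    hence "col U j $ (d+i) = 0"
      using kernel_lemma[OF Cc Bc BB _ _ i, of "col U j"] col_dim[of U j] dimsU0 unfolding A_def A by simp
    thus ?thesis using U i j by simp
  qed
  obtain U1 U2 U3 U4 where sb: "split_block U d d = (U1,U2,U3,U4)" by (metis prod_cases4)
  have dimsU: "dim_row U = d + n" "dim_col U = d + n" using U by auto
  note spl = split_block[OF sb dimsU]
  have U3: "U3 = 0\<^sub>m n d"
  proof (rule eq_matI)
    fix i j assume ij: "i < dim_row (0\<^sub>m n d :: complex mat)" "j < dim_col (0\<^sub>m n d :: complex mat)"
    have "U $$ (d+i, j) = U3 $$ (i,j)" using spl ij by (subst spl(5)) auto
    thus "U3 $$ (i,j) = 0\<^sub>m n d $$ (i,j)" using U3z ij by simp
  qed (use spl in auto)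
  have Ueq: "U = four_block_mat U1 U2 (0\<^sub>m n d) U4" using spl U3 by simp
  have U1: "U1 \<in> carrier_mat d d" and U2: "U2 \<in> carrier_mat d n" and U4: "U4 \<in> carrier_mat n n"
    using spl by auto
  have Uadj: "mat_adjoint U = four_block_mat (mat_adjoint U1) (0\<^sub>m d n) (mat_adjoint U2) (mat_adjoint U4)"
    unfolding Ueq using adj_four_block[OF U1 U2 zero_carrier_mat U4] by simp
  have "mat_adjoint U * U = four_block_mat (mat_adjoint U1 * U1) (mat_adjoint U1 * U2)
      (mat_adjoint U2 * U1) (mat_adjoint U2 * U2 + mat_adjoint U4 * U4)"
    unfolding Uadj unfolding Ueq
    using mult_four_block_mat[OF adj_carrier[OF U1] zero_carrier_mat adj_carrier[OF U2] adj_carrier[OF U4]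
       U1 U2 zero_carrier_mat U4] U1 U2 U4
      mult_carrier_mat[OF adj_carrier[OF U1] U1] mult_carrier_mat[OF adj_carrier[OF U1] U2]
      mult_carrier_mat[OF adj_carrier[OF U2] U1] mult_carrier_mat[OF adj_carrier[OF U4] U4]
    by (simp add: mult_carrier_iff adj_carrier_iff)
  hence "four_block_mat (mat_adjoint U1 * U1) (mat_adjoint U1 * U2)
      (mat_adjoint U2 * U1) (mat_adjoint U2 * U2 + mat_adjoint U4 * U4) = four_block_mat (1\<^sub>m d) (0\<^sub>m d n) (0\<^sub>m n d) (1\<^sub>m n)"
    using UU by simp
  from four_block_inj[OF _ _ _ _ _ _ _ _ this] U1 U2 U4
  have U11: "mat_adjoint U1 * U1 = 1\<^sub>m d" and U12: "mat_adjoint U1 * U2 = 0\<^sub>m d n"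
    and U22: "mat_adjoint U2 * U2 + mat_adjoint U4 * U4 = 1\<^sub>m n"
    by (simp_all add: mult_carrier_iff adj_carrier_iff add_carrier_mat)
  have U11': "U1 * mat_adjoint U1 = 1\<^sub>m d"
    by (rule mat_mult_left_right_inverse[OF adj_carrier[OF U1] U1 U11])
  have U2z: "U2 = 0\<^sub>m d n"
  proof -
    have "U2 = (U1 * mat_adjoint U1) * U2" unfolding U11' using U2 by simp
    also have "\<dots> = U1 * (mat_adjoint U1 * U2)" using assoc_mult_mat[OF U1 adj_carrier[OF U1] U2] .
    also have "\<dots> = 0\<^sub>m d n" unfolding U12 using U1 by simp
    finally show ?thesis .
  qed
  have U44: "mat_adjoint U4 * U4 = 1\<^sub>m n" using U22 unfolding U2z
    using mult_carrier_mat[OF adj_carrier[OF U4] U4] by simp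
  have Ueq2: "U = four_block_mat U1 (0\<^sub>m d n) (0\<^sub>m n d) U4" using Ueq U2z by simp
  have Uadj2: "mat_adjoint U = four_block_mat (mat_adjoint U1) (0\<^sub>m d n) (0\<^sub>m n d) (mat_adjoint U4)"
    using Uadj U2z by simp
  have "mat_adjoint U * A = four_block_mat (0\<^sub>m d d) (mat_adjoint U1 * B) (0\<^sub>m n d) (mat_adjoint U4 * C)"
    unfolding Uadj2 A_def A
    using mult_four_block_mat[OF adj_carrier[OF U1] zero_carrier_mat zero_carrier_mat adj_carrier[OF U4]
        zero_carrier_mat Bc zero_carrier_mat Cc] U1 U4 Bc Cc
      mult_carrier_mat[OF adj_carrier[OF U4] Cc] mult_carrier_mat[OF adj_carrier[OF U1] Bc]
    by (simp add: mult_carrier_iff adj_carrier_iff)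
  hence "mat_adjoint U * A * U = four_block_mat (0\<^sub>m d d) (mat_adjoint U1 * B * U4) (0\<^sub>m n d) (mat_adjoint U4 * C * U4)"
    unfolding Ueq2
    using mult_four_block_mat[OF zero_carrier_mat mult_carrier_mat[OF adj_carrier[OF U1] Bc] zero_carrier_mat
        mult_carrier_mat[OF adj_carrier[OF U4] Cc] U1 zero_carrier_mat zero_carrier_mat U4] U1 U4 Bc Cc
      mult_carrier_mat[OF mult_carrier_mat[OF adj_carrier[OF U4] Cc] U4]
      mult_carrier_mat[OF mult_carrier_mat[OF adj_carrier[OF U1] Bc] U4]
      mult_carrier_mat[OF mult_carrier_mat[OF adj_carrier[OF U1] Bc] zero_carrier_mat]
      mult_carrier_mat[OF mult_carrier_mat[OF adj_carrier[OF U4] Cc] zero_carrier_mat]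
    by (simp add: mult_carrier_iff adj_carrier_iff)
  hence "four_block_mat (0\<^sub>m d d) B' (0\<^sub>m n d) C' = four_block_mat (0\<^sub>m d d) (mat_adjoint U1 * B * U4) (0\<^sub>m n d) (mat_adjoint U4 * C * U4)"
    using AU' A' A'_def by simp
  from four_block_inj[OF zero_carrier_mat B'c zero_carrier_mat C'c zero_carrier_mat
      mult_carrier_mat[OF mult_carrier_mat[OF adj_carrier[OF U1] Bc] U4] zero_carrier_mat
      mult_carrier_mat[OF mult_carrier_mat[OF adj_carrier[OF U4] Cc] U4] this]
  have "C' = mat_adjoint U4 * C * U4" by blast
  thus ?thesis unfolding unitarily_similar_def unitary_mat_def using Cc C'c U4 U44 by blast
qed


theorem mainTheorem1:
  fixes n :: nat and C C' B B' :: "complex mat"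
  assumes "contraction n C" and "contraction n C'"
    and "is_B_mat n C B" and "is_B_mat n C' B'"
  shows "unitarily_similar (assoc_pi B C) (assoc_pi B' C') \<longleftrightarrow> unitarily_similar C C'"
  using fwd_dir[OF assms] back_dir[OF assms] by blast

end
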